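(* Let $\Sigma$ be a finite alphabet, let $T = T_1\cdots T_n$ (the text) and $P = P_1\cdots P_m$ (the pattern) be strings over $\Sigma$, and let $P^G$ be the $\mathcal P$-graph of $P$ (defined in the context). Then for every $i \in [1..n]$, $P$ swap matches $T$ at location $i$ if and only if $P^G$ matches $T$ at position $i$.
   Context: A swap permutation for a string $X = X_1\cdots X_m$ is a permutation $\pi$ of $\{1,\ldots,m\}$ such that (1) if $\pi(i)=j$ then $\pi(j)=i$; (2) $\pi(i)\in\{i-1,i,i+1\}$ for all $i$; (3) if $\pi(i)\neq i$ then $X_{\pi(i)}\neq X_i$. The swapped version is $\pi(X) = X_{\pi(1)}X_{\pi(2)}\cdots X_{\pi(m)}$. $P$ swap matches $T$ at location $i$ (identified by the end position of the match) if there is a swapped version $P'$ of $P$ with $P'_j = T_{i-m+j}$ for all $j\in[1..m]$ (in particular this requires $i\ge m$, so that all these text positions exist). The $\mathcal P$-graph $P^G=(V^P,E^P)$ of $P$ is the directed graph whose vertices are entries of a $3\times m$ array $M$ with rows indexed $-1,0,+1$: the vertices are $M[-1,i]$ for $2\le i\le m$ with label $P_{i-1}$; $M[0,i]$ for $1\le i\le m$ with label $P_i$; and $M[+1,i]$ for $1\le i\le m-1$ with label $P_{i+1}$. The edges are: $(M[-1,i],M[0,i+1])$ for $2\le i\le m-1$; $(M[-1,i],M[+1,i+1])$ for $2\le i\le m-2$; $(M[0,i],M[0,i+1])$ for $1\le i\le m-1$; $(M[0,i],M[+1,i+1])$ for $1\le i\le m-2$; and $(M[+1,i],M[-1,i+1])$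 for $1\le i\le m-1$. $P^G$ matches $T$ at position $i\in[1..n]$ if there is a directed path $u_1u_2\cdots u_m$ in $P^G$ (consecutive vertices joined by edges) with $u_1\in\{M[0,1],M[+1,1]\}$, $u_m\in\{M[-1,m],M[0,m]\}$, and $\mathrm{label}(u_j)=T_{i-m+j}$ for all $j\in[1..m]$ (again requiring all these text positions to exist). *)

theory Defs
  imports Main
begin

text \<open>Strings are 1-indexed: a string X of length m is a function X :: nat => 'a,
  whose letters are X 1, ..., X m (values outside [1..m] are irrelevant).\<close>

definition swap_perm :: "(nat \<Rightarrow> 'a) \<Rightarrow> nat \<Rightarrow> (nat \<Rightarrow> nat) \<Rightarrow> bool" where
  "swap_perm X m \<pi> \<longleftrightarrow>
     bij_betw \<pi> {1..m} {1..m} \<and>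
     (\<forall>i\<in>{1..m}. \<pi> (\<pi> i) = i) \<and>
     (\<forall>i\<in>{1..m}. \<pi> i = i - 1 \<and> i \<ge> 1 \<or> \<pi> i = i \<or> \<pi> i = i + 1) \<and>
     (\<forall>i\<in>{1..m}. \<pi> i \<noteq> i \<longrightarrow> X (\<pi> i) \<noteq> X i)"

definition swap_match :: "(nat \<Rightarrow> 'a) \<Rightarrow> nat \<Rightarrow> (nat \<Rightarrow> 'a) \<Rightarrow> nat \<Rightarrow> nat \<Rightarrow> bool" where
  "swap_match P m T n i \<longleftrightarrow>
     m \<le> i \<and> i \<le> n \<and>
     (\<exists>\<pi>. swap_perm P m \<pi> \<and> (\<forall>j\<in>{1..m}. P (\<pi> j) = T (i - m + j)))"

text \<open>P-graph: vertex M[r,i] is the pair (r,i) with r \<in> {-1,0,1}.\<close>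
definition PG_vertices :: "nat \<Rightarrow> (int \<times> nat) set" where
  "PG_vertices m =
     {(-1, i) | i. 2 \<le> i \<and> i \<le> m} \<union>
     {(0, i) | i. 1 \<le> i \<and> i \<le> m} \<union>
     {(1, i) | i. 1 \<le> i \<and> i + 1 \<le> m}"

definition PG_label :: "(nat \<Rightarrow> 'a) \<Rightarrow> int \<times> nat \<Rightarrow> 'a" where
  "PG_label P v = P (nat (int (snd v) + fst v))"

definition PG_edges :: "nat \<Rightarrow> ((int \<times> nat) \<times> (int \<times> nat)) set" where
  "PG_edges m =
     {((-1, i), (0, i + 1)) | i. 2 \<le> i \<and> i + 1 \<le> m} \<union>
     {((-1, i), (1, i + 1)) | i. 2 \<le> i \<and> i + 2 \<le> m} \<union>
     {((0, i), (0, i + 1)) | i. 1 \<le> i \<and> i + 1 \<le> m} \<union>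
     {((0, i), (1, i + 1)) | i. 1 \<le> i \<and> i + 2 \<le> m} \<union>
     {((1, i), (-1, i + 1)) | i. 1 \<le> i \<and> i + 1 \<le> m}"

definition PG_match :: "(nat \<Rightarrow> 'a) \<Rightarrow> nat \<Rightarrow> (nat \<Rightarrow> 'a) \<Rightarrow> nat \<Rightarrow> nat \<Rightarrow> bool" where
  "PG_match P m T n i \<longleftrightarrow>
     m \<le> i \<and> i \<le> n \<and>
     (\<exists>u :: nat \<Rightarrow> int \<times> nat.
        (\<forall>j\<in>{1..m}. u j \<in> PG_vertices m) \<and>
        (\<forall>j. 1 \<le> j \<and> j < m \<longrightarrow> (u j, u (j + 1)) \<in> PG_edges m) \<and>
        u 1 \<in> {(0, 1), (1, 1)} \<and>
        u m \<in> {(-1, m), (0, m)} \<and>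
        (\<forall>j\<in>{1..m}. PG_label P (u j) = T (i - m + j)))"

end

theory Submission
  imports Defs
begin

lemma edge_rel: "((r,j),(s,k)) \<in> PG_edges m \<Longrightarrow> (r = 1 \<longleftrightarrow> s = -1) \<and> k = j+1 \<and> (s = 1 \<longrightarrow> j + 2 \<le> m) \<and> (r = -1 \<longrightarrow> 2 \<le> j)"
  unfolding PG_edges_def by auto
lemma vert: "(r,j) \<in> PG_vertices m \<Longrightarrow> (r = -1 \<and> 2 \<le> j \<and> j \<le> m) \<or> (r = 0 \<and> 1 \<le> j \<and> j \<le> m) \<or> (r = 1 \<and> 1 \<le> j \<and> j+1 \<le> m)"
  unfolding PG_vertices_def by auto

lemma cols:
  assumes "\<forall>j. 1 \<le> j \<and> j < m \<longrightarrow> (u j, u (j + 1)) \<in> PG_edges m"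
    and "u 1 \<in> {(0, 1), (1, 1)}"
  shows "j \<in> {1..m} \<Longrightarrow> snd (u j) = j"
proof (induction j)
  case 0 then show ?case by simp
next
  case (Suc j)
  show ?case
  proof (cases "j = 0")
    case True then show ?thesis using assms(2) by auto
  next
    case False
    then have "snd (u j) = j" using Suc by auto
    moreover have "(u j, u (j+1)) \<in> PG_edges m" using assms(1) Suc False by auto
    ultimately show ?thesis using edge_rel[of "fst (u j)" j "fst (u (j+1))" "snd (u (j+1))" m]
      by (metis Suc_eq_plus1 prod.collapse)
  qed
qed

lemma swap_to_graph:
  assumes m1: "1 \<le> m" and sp: "swap_perm P m \<pi>" and lab: "\<forall>j\<in>{1..m}. P (\<pi> j) = T (i - m + j)"
  shows "\<exists>u :: nat \<Rightarrow> int \<times> nat.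
        (\<forall>j\<in>{1..m}. u j \<in> PG_vertices m) \<and>
        (\<forall>j. 1 \<le> j \<and> j < m \<longrightarrow> (u j, u (j + 1)) \<in> PG_edges m) \<and>
        u 1 \<in> {(0, 1), (1, 1)} \<and>
        u m \<in> {(-1, m), (0, m)} \<and>
        (\<forall>j\<in>{1..m}. PG_label P (u j) = T (i - m + j))"
proof -
  have rng: "\<And>j. j \<in> {1..m} \<Longrightarrow> \<pi> j \<in> {1..m}" using sp unfolding swap_perm_def bij_betw_def by auto
  have inv: "\<And>j. j \<in> {1..m} \<Longrightarrow> \<pi> (\<pi> j) = j" using sp unfolding swap_perm_def by auto
  have nb: "\<And>j. j \<in> {1..m} \<Longrightarrow> \<pi> j = j - 1 \<or> \<pi> j = j \<or> \<pi> j = j + 1" using sp unfolding swap_perm_def by auto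
  define u where "u j = (int (\<pi> j) - int j, j)" for j
  have V: "\<forall>j\<in>{1..m}. u j \<in> PG_vertices m"
  proof
    fix j assume j: "j \<in> {1..m}"
    from nb[OF j] show "u j \<in> PG_vertices m"
    proof (elim disjE)
      assume h: "\<pi> j = j - 1"
      then have "2 \<le> j" using rng[OF j] by auto
      then have "u j = (-1, j)" using h by (simp add: u_def of_nat_diff)
      then show ?thesis using j \<open>2 \<le> j\<close> unfolding PG_vertices_def by auto
    next
      assume h: "\<pi> j = j"
      then have "u j = (0, j)" by (simp add: u_def)
      then show ?thesis using j unfolding PG_vertices_def by auto
    next
      assume h: "\<pi> j = j + 1"
      then have "j + 1 \<le> m" using rng[OF j] by auto
      have "u j = (1, j)" using h by (simp add: u_def)
      then show ?thesis using j \<open>j + 1 \<le> m\<close> unfolding PG_vertices_def by auto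
    qed
  qed
  have E: "\<forall>j. 1 \<le> j \<and> j < m \<longrightarrow> (u j, u (j + 1)) \<in> PG_edges m"
  proof (intro allI impI)
    fix j assume j: "1 \<le> j \<and> j < m"
    then have j1: "j \<in> {1..m}" and j2: "j+1 \<in> {1..m}" by auto
    have a: "\<pi> j = j + 1 \<longleftrightarrow> \<pi> (j+1) = j" using inv[OF j1] inv[OF j2] by metis
    have uj: "u j = (-1, j) \<and> 2 \<le> j \<and> \<pi> j = j - 1 \<or> u j = (0, j) \<and> \<pi> j = j \<or> u j = (1, j) \<and> \<pi> j = j + 1"
      using nb[OF j1] rng[OF j1] by (auto simp: u_def of_nat_diff)
    have uj1: "u (j+1) = (-1, j+1) \<and> \<pi> (j+1) = j \<or> u (j+1) = (0, j+1) \<and> \<pi> (j+1) = j+1 \<or> u (j+1) = (1, j+1) \<and> j + 2 \<le> m \<and> \<pi> (j+1) = j+2"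
      using nb[OF j2] rng[OF j2] by (auto simp: u_def of_nat_diff)
    show "(u j, u (j + 1)) \<in> PG_edges m"
      using uj uj1 a j unfolding PG_edges_def by auto
  qed
  have U1: "u 1 \<in> {(0, 1), (1, 1)}" using nb[of 1] rng[of 1] m1 unfolding u_def by auto
  have Um: "u m \<in> {(-1, m), (0, m)}" using nb[of m] rng[of m] m1 unfolding u_def by auto
  have L: "\<forall>j\<in>{1..m}. PG_label P (u j) = T (i - m + j)"
    using lab unfolding u_def PG_label_def by auto
  show ?thesis using V E U1 Um L by blast
qed


lemma graph_to_swap:
  fixes u :: "nat \<Rightarrow> int \<times> nat"
  assumes m1: "1 \<le> m"
    and V: "\<forall>j\<in>{1..m}. u j \<in> PG_vertices m"
    and E: "\<forall>j. 1 \<le> j \<and> j < m \<longrightarrow> (u j, u (j + 1)) \<in> PG_edges m"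
    and U1: "u 1 \<in> {(0, 1), (1, 1)}"
    and Um: "u m \<in> {(-1, m), (0, m)}"
    and L: "\<forall>j\<in>{1..m}. PG_label P (u j) = T (i - m + j)"
  shows "\<exists>\<pi>. swap_perm P m \<pi> \<and> (\<forall>j\<in>{1..m}. P (\<pi> j) = T (i - m + j))"
proof -
  define r where "r j = fst (u j)" for j
  have c: "\<And>j. j \<in> {1..m} \<Longrightarrow> u j = (r j, j)"
    using cols[OF E U1] unfolding r_def by (metis prod.collapse)
  have R: "\<And>j. j \<in> {1..m} \<Longrightarrow> (r j = -1 \<and> 2 \<le> j) \<or> r j = 0 \<or> (r j = 1 \<and> j+1 \<le> m)"
    using V c vert by metis
  have S: "\<And>j. 1 \<le> j \<Longrightarrow> j < m \<Longrightarrow> (r j = 1 \<longleftrightarrow> r (j+1) = -1)"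
  proof -
    fix j assume "1 \<le> j" "j < m"
    then have "(u j, u (j+1)) \<in> PG_edges m" "u j = (r j, j)" "u (j+1) = (r (j+1), j+1)"
      using E c by auto
    then show "r j = 1 \<longleftrightarrow> r (j+1) = -1" using edge_rel by metis
  qed
  have L': "\<And>j. j \<in> {1..m} \<Longrightarrow> P (nat (int j + r j)) = T (i - m + j)"
    using L c unfolding PG_label_def by (metis fst_conv snd_conv)
  define \<pi> where "\<pi> j = (if r j = 1 \<and> P (j+1) \<noteq> P j then j+1
      else if r j = -1 \<and> P (j-1) \<noteq> P j then j-1 else j)" for j
  have rng: "\<And>j. j \<in> {1..m} \<Longrightarrow> \<pi> j \<in> {1..m}"
    using R unfolding \<pi>_def by fastforce
  have inv: "\<And>j. j \<in> {1..m} \<Longrightarrow> \<pi> (\<pi> j) = j"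
  proof -
    fix j assume j: "j \<in> {1..m}"
    show "\<pi> (\<pi> j) = j"
    proof (cases "r j = 1 \<and> P (j+1) \<noteq> P j")
      case True
      then have "j < m" using R[OF j] by auto
      then have "r (j+1) = -1" using S[of j] j True by auto
      then show ?thesis using True unfolding \<pi>_def by auto
    next
      case F: False
      show ?thesis
      proof (cases "r j = -1 \<and> P (j-1) \<noteq> P j")
        case True
        then have j2: "2 \<le> j" using R[OF j] by auto
        then have "r (j-1) = 1" using S[of "j-1"] j True by auto
        then show ?thesis using True F j2 unfolding \<pi>_def by auto
      next
        case False
        then show ?thesis using F unfolding \<pi>_def by auto
      qed
    qed
  qed
  have sp: "swap_perm P m \<pi>"
    unfolding swap_perm_def
  proof (intro conjI ballI)
    show "bij_betw \<pi> {1..m} {1..m}"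
      by (rule bij_betw_byWitness[where f'=\<pi>]) (use inv rng in auto)
  next
    fix j assume "j \<in> {1..m}" then show "\<pi> (\<pi> j) = j" by (rule inv)
  next
    fix j assume j: "j \<in> {1..m}"
    show "\<pi> j = j - 1 \<and> j \<ge> 1 \<or> \<pi> j = j \<or> \<pi> j = j + 1" using j unfolding \<pi>_def by auto
  next
    fix j assume j: "j \<in> {1..m}"
    show "\<pi> j \<noteq> j \<longrightarrow> P (\<pi> j) \<noteq> P j" unfolding \<pi>_def by auto
  qed
  have lab: "\<forall>j\<in>{1..m}. P (\<pi> j) = T (i - m + j)"
  proof
    fix j assume j: "j \<in> {1..m}"
    have "P (\<pi> j) = P (nat (int j + r j))"
      using R[OF j] unfolding \<pi>_def
      by (auto simp: nat_add_distrib nat_diff_distrib)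
    then show "P (\<pi> j) = T (i - m + j)" using L'[OF j] by simp
  qed
  show ?thesis using sp lab by blast
qed

theorem lemma1:
  fixes T P :: "nat \<Rightarrow> 'a::finite" and n m :: nat
  assumes "1 \<le> m"
  shows "\<forall>i\<in>{1..n}. swap_match P m T n i \<longleftrightarrow> PG_match P m T n i"
proof
  fix i assume "i \<in> {1..n}"
  show "swap_match P m T n i \<longleftrightarrow> PG_match P m T n i"
  proof
    assume "swap_match P m T n i"
    then show "PG_match P m T n i"
      unfolding swap_match_def PG_match_def using swap_to_graph[OF assms] by blast
  next
    assume "PG_match P m T n i"
    then show "swap_match P m T n i"
      unfolding swap_match_def PG_match_def using graph_to_swap[OF assms] by blast
  qed
qed

end
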